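(* Let $n\in\{2,6,10,\dots\}$ and let $P$ be a maximal increasing path of $f_{n+4}$ starting at the origin of $\{0,1\}^{n+4}$. Write vertices as $(\mathbf{x},y_1,y_2,y_3,y_4)$ with $\mathbf{x}\in\{0,1\}^n$, and let $\mathbf{0},\mathbf{1}\in\{0,1\}^n$ be the all-zeros and all-ones vectors. Then $P$ consists, in order, of: (i) an initial segment contained in $\{(\mathbf{x},0,0,0,0)\}$ whose projection to the first $n$ coordinates is an increasing path of $f_n$ from $\mathbf{0}$ to $\mathbf{1}$; (ii) the vertices $(\mathbf{1},1,0,0,0)$ and then $(\mathbf{1},1,1,0,0)$; (iii) $n$ steps, each changing one of the first $n$ coordinates from $1$ to $0$, ending at $(\mathbf{0},1,1,0,0)$; (iv) the vertices $(\mathbf{0},1,1,1,0)$ and then $(\mathbf{0},1,1,1,1)$; (v) a final segment contained in $\{(\mathbf{x},1,1,1,1)\}$ whose projection to the first $n$ coordinates is a maximal increasing path of $f_n$ starting at $\mathbf{0}$ (and hence, by induction, ending at $\mathbf{1}$).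
   Context: For $n\in\{2,6,10,\dots\}$ define polynomials $f_n$ in variables $x_1,\dots,x_n$ (evaluated on $\{0,1\}^n$) recursively. Set $f_2(x_1,x_2):=x_1+x_2$. For $n\in\{2,6,10,\dots\}$, write $\mathbf{x}=(x_1,\dots,x_n)$, $S:=\sum_{i=1}^n x_i$, let $M_n:=\max_{\{0,1\}^n} f_n-\min_{\{0,1\}^n} f_n+1$, and define $f_{n+4}(\mathbf{x},x_{n+1},x_{n+2},x_{n+3},x_{n+4}) := f_n(\mathbf{x}) - M_n n^2 x_{n+1} + M_n(n+1) S x_{n+1} - x_{n+2} - 2M_n n S x_{n+2} + 2M_n n(n+2) x_{n+1}x_{n+2} - 4 S x_{n+3} + 2x_{n+1}x_{n+3} + 2x_{n+2}x_{n+3} - 3x_{n+3} + (M_n(n-1)+4) S x_{n+4} + 6M_n n^2 x_{n+3}x_{n+4} - 5M_n n^2 x_{n+4}$. For a function $f:\{0,1\}^m\to\mathbb{R}$, an increasing path is a sequence of vertices $v_0,\dots,v_k$ of $\{0,1\}^m$ such that consecutive vertices differ in exactly one coordinate and $f(v_{j+1})>f(v_j)$ for all $j$. It is maximal if its last vertex is a local maximum (no neighbor has strictly larger value). *)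

theory Defs
  imports Main
begin

text \<open>Vertices of the cube {0,1}^m are integer lists of length m with entries in {0,1};
  coordinate x_i (1-based in the paper) is v ! (i-1).\<close>

definition cube :: "nat \<Rightarrow> int list set" where
  "cube m = {v. length v = m \<and> set v \<subseteq> {0, 1}}"

text \<open>fk k is the polynomial f_n for n = 4k+2, evaluated on vectors.\<close>
primrec fk :: "nat \<Rightarrow> int list \<Rightarrow> int" where
  "fk 0 = (\<lambda>v. v ! 0 + v ! 1)"
| "fk (Suc k) =
     (let g = fk k; nn = 4 * k + 2; n = int nn;
          M = Max (g ` cube nn) - Min (g ` cube nn) + 1
      in (\<lambda>v. let x = take nn v; S = sum_list x;
                  a = v ! nn; b = v ! (nn + 1); c = v ! (nn + 2); d = v ! (nn + 3)
              in g x - M * n^2 * a + M * (n + 1) * S * a - b - 2 * M * n * S * b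
                 + 2 * M * n * (n + 2) * a * b - 4 * S * c + 2 * a * c + 2 * b * c
                 - 3 * c + (M * (n - 1) + 4) * S * d + 6 * M * n^2 * c * d
                 - 5 * M * n^2 * d))"

definition f :: "nat \<Rightarrow> int list \<Rightarrow> int" where
  "f n = fk ((n - 2) div 4)"

definition adjacent :: "int list \<Rightarrow> int list \<Rightarrow> bool" where
  "adjacent u v \<longleftrightarrow> length u = length v \<and> card {i. i < length u \<and> u ! i \<noteq> v ! i} = 1"

definition increasing_path :: "(int list \<Rightarrow> int) \<Rightarrow> nat \<Rightarrow> int list list \<Rightarrow> bool" where
  "increasing_path g m P \<longleftrightarrow> P \<noteq> [] \<and> set P \<subseteq> cube m \<and>
     (\<forall>j. Suc j < length P \<longrightarrow> adjacent (P ! j) (P ! Suc j) \<and> g (P ! j) < g (P ! Suc j))"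

definition local_max :: "(int list \<Rightarrow> int) \<Rightarrow> nat \<Rightarrow> int list \<Rightarrow> bool" where
  "local_max g m v \<longleftrightarrow> v \<in> cube m \<and> (\<forall>w \<in> cube m. adjacent v w \<longrightarrow> \<not> g v < g w)"

definition maximal_increasing_path :: "(int list \<Rightarrow> int) \<Rightarrow> nat \<Rightarrow> int list list \<Rightarrow> bool" where
  "maximal_increasing_path g m P \<longleftrightarrow> increasing_path g m P \<and> local_max g m (last P)"

end

theory Submission
  imports Defs
begin

definition FF :: "int \<Rightarrow> int \<Rightarrow> int \<Rightarrow> int \<Rightarrow> int \<Rightarrow> int \<Rightarrow> int \<Rightarrow> int \<Rightarrow> int" where
"FF G S M n a b c d = G - M * n^2 * a + M * (n + 1) * S * a - b - 2 * M * n * S * b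
                 + 2 * M * n * (n + 2) * a * b - 4 * S * c + 2 * a * c + 2 * b * c
                 - 3 * c + (M * (n - 1) + 4) * S * d + 6 * M * n^2 * c * d
                 - 5 * M * n^2 * d"

definition FL :: "int \<Rightarrow> int \<Rightarrow> int \<Rightarrow> int \<Rightarrow> int \<Rightarrow> int \<Rightarrow> int \<Rightarrow> int \<Rightarrow> int \<Rightarrow> int \<Rightarrow> int \<Rightarrow> int" where
"FL G S M p q r s a b c d = G - p*a + (q + r)*a - b - 2*q*b + (2*p + 4*s)*a*b - 4*S*c + 2*a*c + 2*b*c
   - 3*c + (q - r + 4*S)*d + 6*p*c*d - 5*p*d"

lemma FF_FL: "FF G S M N a b c d = FL G S M (M*N*N) (M*N*S) (M*S) (M*N) a b c d"
  by (simp add: FF_def FL_def algebra_simps power2_eq_square)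

lemma FL_simps:
  "FL G S M p q r s 0 0 0 0 = G"
  "FL G S M p q r s 1 0 0 0 = G - p + q + r"
  "FL G S M p q r s 0 1 0 0 = G - 1 - 2*q"
  "FL G S M p q r s 0 0 1 0 = G - 4*S - 3"
  "FL G S M p q r s 0 0 0 1 = G + q - r + 4*S - 5*p"
  "FL G S M p q r s 1 1 0 0 = G + p - q + r + 4*s - 1"
  "FL G S M p q r s 1 0 1 0 = G - p + q + r - 4*S - 1"
  "FL G S M p q r s 1 0 0 1 = G - 6*p + 2*q + 4*S"
  "FL G S M p q r s 0 1 1 0 = G - 2*q - 4*S - 2"
  "FL G S M p q r s 1 1 1 0 = G + p - q + r + 4*s - 4*S"
  "FL G S M p q r s 1 1 0 1 = G - 4*p + 4*s + 4*S - 1"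
  "FL G S M p q r s 0 1 1 1 = G - q - r + p - 2"
  "FL G S M p q r s 1 0 1 1 = G + 2*q - 1"
  "FL G S M p q r s 1 1 1 1 = G + 2*p + 4*s"
  by (simp_all add: FL_def)

lemma atoms:
  fixes M N S :: int
  assumes "N \<ge> 2" "M \<ge> 1" "0 \<le> S" "S \<le> N"
  obtains p q r s where "r \<le> s" "q \<le> p" "s \<ge> 2*M" "p \<ge> 2*s" "q \<ge> 0" "r \<ge> 0" "q \<ge> 2*r" "r \<ge> S" "s \<ge> N"
    "S \<ge> 1 \<Longrightarrow> r \<ge> M" "S \<ge> 1 \<Longrightarrow> q \<ge> s"
    "S \<le> N - 1 \<Longrightarrow> q + r \<le> p - M" 
    "S = N \<Longrightarrow> q = p" "S = N \<Longrightarrow> r = s" "S = 0 \<Longrightarrow> q = 0" "S = 0 \<Longrightarrow> r = 0"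
    "\<And>G a b c d. FF G S M N a b c d = FL G S M p q r s a b c d"
    "\<And>G a b c d. FF G (S+1) M N a b c d = FL G (S+1) M p (q+s) (r+M) s a b c d"
    "\<And>G a b c d. FF G (S-1) M N a b c d = FL G (S-1) M p (q-s) (r-M) s a b c d"
proof -
  have 1: "M*S \<le> M*N" using assms by (intro mult_left_mono) auto
  have 2: "M*N*S \<le> M*N*N" using assms by (intro mult_left_mono) auto
  have 3: "M*2 \<le> M*N" using assms by (intro mult_left_mono) auto
  have 4: "M*N*2 \<le> M*N*N" using assms by (intro mult_left_mono) auto
  have 5: "M*N*S \<ge> 0" using assms by simp
  have 6: "M*S \<ge> 0" using assms by simp
  have 7: "M*S*2 \<le> M*S*N" using assms by (intro mult_left_mono) auto
  have 8: "1*S \<le> M*S" using assms by (intro mult_right_mono) auto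
  have 9: "1*N \<le> M*N" using assms by (intro mult_right_mono) auto
  have 10: "S \<ge> 1 \<Longrightarrow> M*1 \<le> M*S" using assms by (intro mult_left_mono) auto
  have 11: "S \<ge> 1 \<Longrightarrow> M*N*1 \<le> M*N*S" using assms by (intro mult_left_mono) auto
  have 12: "S \<le> N - 1 \<Longrightarrow> M*(N+1)*S \<le> M*(N+1)*(N-1)" using assms by (intro mult_left_mono) auto
  have e1: "M*N*(S+1) = M*N*S + M*N" "M*(S+1) = M*S+M" "M*N*(S-1) = M*N*S - M*N" "M*(S-1) = M*S-M"
    by (simp_all add: algebra_simps)
  have e2: "M*(N+1)*S = M*N*S + M*S" "M*(N+1)*(N-1) = M*N*N - M" by (simp_all add: algebra_simps)
  note F = 1 2 3 4 5 6 7 8 9 10 11 12 e2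
  show ?thesis
    apply (rule that[of "M*S" "M*N" "M*N*S" "M*N*N"])
    subgoal using F by (simp add: mult_ac)
    subgoal using F by (simp add: mult_ac)
    subgoal using F by (simp add: mult_ac)
    subgoal using F by (simp add: mult_ac)
    subgoal using F by (simp add: mult_ac)
    subgoal using F by (simp add: mult_ac)
    subgoal using F by (simp add: mult_ac)
    subgoal using F by (simp add: mult_ac)
    subgoal using F by (simp add: mult_ac)
    subgoal using F by (simp add: mult_ac)
    subgoal using F by (simp add: mult_ac)
    subgoal using F by (simp add: mult_ac)
    subgoal by simp
    subgoal by simp
    subgoal by simp
    subgoal by simp
    subgoal by (rule FF_FL)
    subgoal using FF_FL e1 by metis
    subgoal using FF_FL e1 by metis
    done
qed

lemma A1: fixes M N S G :: int assumes as: "N \<ge> 2" "M \<ge> 1" "0 \<le> S" "S \<le> N"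
  shows "FF G S M N 0 0 0 0 < FF G S M N 1 0 0 0 \<Longrightarrow> S = N"
    and "\<not> FF G S M N 0 0 0 0 < FF G S M N 0 1 0 0"
    and "\<not> FF G S M N 0 0 0 0 < FF G S M N 0 0 1 0"
    and "\<not> FF G S M N 0 0 0 0 < FF G S M N 0 0 0 1"
    and "S = N \<Longrightarrow> FF G S M N 0 0 0 0 < FF G S M N 1 0 0 0"
    and "FF G S M N 0 0 0 0 = G"
    and "S = N \<Longrightarrow> \<not> FF G S M N 1 0 0 0 < FF G S M N 0 0 0 0"
    and "S = N \<Longrightarrow> \<not> FF G S M N 1 0 0 0 < FF G S M N 1 0 1 0"
    and "S = N \<Longrightarrow> \<not> FF G S M N 1 0 0 0 < FF G S M N 1 0 0 1"
    and "S = N \<Longrightarrow> FF G S M N 1 0 0 0 < FF G S M N 1 1 0 0"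
    and "\<not> FF G S M N 1 1 0 0 < FF G S M N 0 1 0 0"
    and "\<not> FF G S M N 1 1 0 0 < FF G S M N 1 0 0 0"
    and "FF G S M N 1 1 0 0 < FF G S M N 1 1 1 0 \<Longrightarrow> S = 0"
    and "S = 0 \<Longrightarrow> FF G S M N 1 1 0 0 < FF G S M N 1 1 1 0"
    and "\<not> FF G S M N 1 1 0 0 < FF G S M N 1 1 0 1"
    and "S = 0 \<Longrightarrow> \<not> FF G S M N 1 1 1 0 < FF G S M N 0 1 1 0"
    and "S = 0 \<Longrightarrow> \<not> FF G S M N 1 1 1 0 < FF G S M N 1 0 1 0"
    and "S = 0 \<Longrightarrow> \<not> FF G S M N 1 1 1 0 < FF G S M N 1 1 0 0"
    and "S = 0 \<Longrightarrow> FF G S M N 1 1 1 0 < FF G S M N 1 1 1 1"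
    and "\<not> FF G S M N 1 1 1 1 < FF G S M N 0 1 1 1"
    and "\<not> FF G S M N 1 1 1 1 < FF G S M N 1 0 1 1"
    and "\<not> FF G S M N 1 1 1 1 < FF G S M N 1 1 0 1"
    and "\<not> FF G S M N 1 1 1 1 < FF G S M N 1 1 1 0"
proof -
  obtain p q r s where U: "r \<le> s" "q \<le> p" "s \<ge> 2*M" "p \<ge> 2*s" "q \<ge> 0" "r \<ge> 0" "q \<ge> 2*r" "r \<ge> S" "s \<ge> N"
    and c12: "S \<le> N - 1 \<Longrightarrow> q + r \<le> p - M"
    and eN: "S = N \<Longrightarrow> q = p" "S = N \<Longrightarrow> r = s" and eZ: "S = 0 \<Longrightarrow> q = 0" "S = 0 \<Longrightarrow> r = 0"
    and E: "\<And>G a b c d. FF G S M N a b c d = FL G S M p q r s a b c d"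
    using atoms[OF as] by metis
  show "FF G S M N 0 0 0 0 < FF G S M N 1 0 0 0 \<Longrightarrow> S = N"
  proof (rule ccontr)
    assume h: "FF G S M N 0 0 0 0 < FF G S M N 1 0 0 0" "S \<noteq> N"
    then have "S \<le> N - 1" using as by simp
    from c12[OF this] h(1) as show False unfolding E FL_simps by linarith
  qed
  show "\<not> FF G S M N 0 0 0 0 < FF G S M N 0 1 0 0" using U as unfolding E FL_simps by linarith
  show "\<not> FF G S M N 0 0 0 0 < FF G S M N 0 0 1 0" using U as unfolding E FL_simps by linarith
  show "\<not> FF G S M N 0 0 0 0 < FF G S M N 0 0 0 1" using U as unfolding E FL_simps by linarith
  show "S = N \<Longrightarrow> FF G S M N 0 0 0 0 < FF G S M N 1 0 0 0" using U as eN unfolding E FL_simps by auto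
  show "FF G S M N 0 0 0 0 = G" using U as unfolding E FL_simps by linarith
  show "S = N \<Longrightarrow> \<not> FF G S M N 1 0 0 0 < FF G S M N 0 0 0 0" using U as eN unfolding E FL_simps by auto
  show "S = N \<Longrightarrow> \<not> FF G S M N 1 0 0 0 < FF G S M N 1 0 1 0" using U as eN unfolding E FL_simps by auto
  show "S = N \<Longrightarrow> \<not> FF G S M N 1 0 0 0 < FF G S M N 1 0 0 1" using U as eN unfolding E FL_simps by auto
  show "S = N \<Longrightarrow> FF G S M N 1 0 0 0 < FF G S M N 1 1 0 0" using U as eN unfolding E FL_simps by auto
  show "\<not> FF G S M N 1 1 0 0 < FF G S M N 0 1 0 0" using U as unfolding E FL_simps by linarith
  show "\<not> FF G S M N 1 1 0 0 < FF G S M N 1 0 0 0" using U as unfolding E FL_simps by linarith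
  show "FF G S M N 1 1 0 0 < FF G S M N 1 1 1 0 \<Longrightarrow> S = 0" using U as unfolding E FL_simps by linarith
  show "S = 0 \<Longrightarrow> FF G S M N 1 1 0 0 < FF G S M N 1 1 1 0" using U as unfolding E FL_simps by linarith
  show "\<not> FF G S M N 1 1 0 0 < FF G S M N 1 1 0 1" using U as unfolding E FL_simps by linarith
  show "S = 0 \<Longrightarrow> \<not> FF G S M N 1 1 1 0 < FF G S M N 0 1 1 0" using U as eZ unfolding E FL_simps by auto
  show "S = 0 \<Longrightarrow> \<not> FF G S M N 1 1 1 0 < FF G S M N 1 0 1 0" using U as eZ unfolding E FL_simps by auto
  show "S = 0 \<Longrightarrow> \<not> FF G S M N 1 1 1 0 < FF G S M N 1 1 0 0" using U as eZ unfolding E FL_simps by auto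
  show "S = 0 \<Longrightarrow> FF G S M N 1 1 1 0 < FF G S M N 1 1 1 1" using U as eZ unfolding E FL_simps by auto
  show "\<not> FF G S M N 1 1 1 1 < FF G S M N 0 1 1 1" using U as unfolding E FL_simps by linarith
  show "\<not> FF G S M N 1 1 1 1 < FF G S M N 1 0 1 1" using U as unfolding E FL_simps by linarith
  show "\<not> FF G S M N 1 1 1 1 < FF G S M N 1 1 0 1" using U as unfolding E FL_simps by linarith
  show "\<not> FF G S M N 1 1 1 1 < FF G S M N 1 1 1 0" using U as unfolding E FL_simps by linarith
qed

lemma B1: fixes M N S G G' :: int assumes as: "N \<ge> 2" "M \<ge> 1" "0 \<le> S" "S \<le> N" and gg: "G' - G < M" "G - G' < M"
  shows "S = N \<Longrightarrow> \<not> FF G S M N 1 0 0 0 < FF G' (S-1) M N 1 0 0 0"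
    and "S + 1 \<le> N \<Longrightarrow> \<not> FF G S M N 1 1 0 0 < FF G' (S+1) M N 1 1 0 0"
    and "S \<ge> 1 \<Longrightarrow> FF G S M N 1 1 0 0 < FF G' (S-1) M N 1 1 0 0"
    and "S = 0 \<Longrightarrow> \<not> FF G S M N 1 1 1 0 < FF G' (S+1) M N 1 1 1 0"
    and "FF G S M N 1 1 1 1 < FF G' S' M N 1 1 1 1 \<longleftrightarrow> G < G'"
proof -
  obtain p q r s where U: "r \<le> s" "q \<le> p" "s \<ge> 2*M" "p \<ge> 2*s" "q \<ge> 0" "r \<ge> 0" "q \<ge> 2*r" "r \<ge> S" "s \<ge> N"
    and E: "\<And>G a b c d. FF G S M N a b c d = FL G S M p q r s a b c d"
    "\<And>G a b c d. FF G (S+1) M N a b c d = FL G (S+1) M p (q+s) (r+M) s a b c d"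
    "\<And>G a b c d. FF G (S-1) M N a b c d = FL G (S-1) M p (q-s) (r-M) s a b c d"
    using atoms[OF as] by metis
  show "FF G S M N 1 1 1 1 < FF G' S' M N 1 1 1 1 \<longleftrightarrow> G < G'"
    by (simp add: FF_def algebra_simps)
  show "S = N \<Longrightarrow> \<not> FF G S M N 1 0 0 0 < FF G' (S-1) M N 1 0 0 0"
    using U as gg unfolding E FL_simps by linarith
  show "S + 1 \<le> N \<Longrightarrow> \<not> FF G S M N 1 1 0 0 < FF G' (S+1) M N 1 1 0 0"
    using U as gg unfolding E FL_simps by linarith
  show "S \<ge> 1 \<Longrightarrow> FF G S M N 1 1 0 0 < FF G' (S-1) M N 1 1 0 0"
    using U as gg unfolding E FL_simps by linarith
  show "S = 0 \<Longrightarrow> \<not> FF G S M N 1 1 1 0 < FF G' (S+1) M N 1 1 1 0"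
    using U as gg unfolding E FL_simps by (simp add: algebra_simps)
qed



lemma finite_cube: "finite (cube m)"
proof -
  have "cube m \<subseteq> {xs. set xs \<subseteq> {0,1} \<and> length xs = m}" by (auto simp: cube_def)
  moreover have "finite {xs. set xs \<subseteq> ({0,1}::int set) \<and> length xs = m}"
    by (rule finite_lists_length_eq) simp
  ultimately show ?thesis by (rule finite_subset)
qed

lemma rep_cube: "replicate m 0 \<in> cube m" "replicate m 1 \<in> cube m"
  by (auto simp: cube_def)

lemma cube_nth: "x \<in> cube m \<Longrightarrow> i < m \<Longrightarrow> x ! i = 0 \<or> x ! i = 1"
  unfolding cube_def using nth_mem by fastforce

lemma cube_append: "length x = n \<Longrightarrow> x @ t \<in> cube (n + length t) \<longleftrightarrow> x \<in> cube n \<and> set t \<subseteq> {0,1}"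
  by (auto simp: cube_def)

lemma cube_app4: "x \<in> cube n \<Longrightarrow> a \<in> {0,1} \<Longrightarrow> b \<in> {0,1} \<Longrightarrow> c \<in> {0,1} \<Longrightarrow> d \<in> {0,1}
   \<Longrightarrow> x @ [a,b,c,d] \<in> cube (n+4)"
  by (auto simp: cube_def)

lemma sum_bounds: "set (x::int list) \<subseteq> {0,1} \<Longrightarrow> 0 \<le> sum_list x \<and> sum_list x \<le> int (length x)"
  by (induction x) auto

lemma sum_full: "set (x::int list) \<subseteq> {0,1} \<Longrightarrow> sum_list x = int (length x) \<Longrightarrow> x = replicate (length x) 1"
proof (induction x)
  case (Cons a x)
  then have "0 \<le> sum_list x \<and> sum_list x \<le> int (length x)" using sum_bounds by auto
  with Cons show ?case by auto
qed simp

lemma sum_zero: "set (x::int list) \<subseteq> {0,1} \<Longrightarrow> sum_list x = 0 \<Longrightarrow> x = replicate (length x) 0"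
proof (induction x)
  case (Cons a x)
  then have "0 \<le> sum_list x \<and> sum_list x \<le> int (length x)" using sum_bounds by auto
  with Cons show ?case by auto
qed simp

lemma cube_sum: "x \<in> cube n \<Longrightarrow> 0 \<le> sum_list x \<and> sum_list x \<le> int n"
  using sum_bounds by (auto simp: cube_def)

lemma cube_sum_n: "x \<in> cube n \<Longrightarrow> sum_list x = int n \<Longrightarrow> x = replicate n 1"
  using sum_full by (auto simp: cube_def)

lemma cube_sum_0: "x \<in> cube n \<Longrightarrow> sum_list x = 0 \<Longrightarrow> x = replicate n 0"
  using sum_zero by (auto simp: cube_def)

lemma sum_rep: "sum_list (replicate n (0::int)) = 0" "sum_list (replicate n (1::int)) = int n"
  by (simp_all add: sum_list_replicate)

lemma cube_nonzero: "x \<in> cube n \<Longrightarrow> x \<noteq> replicate n 0 \<Longrightarrow> \<exists>i<n. x ! i = 1"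
proof -
  assume x: "x \<in> cube n" "x \<noteq> replicate n 0"
  have l: "length x = n" using x by (simp add: cube_def)
  have "\<exists>i<n. x ! i \<noteq> 0"
  proof (rule ccontr)
    assume "\<not> (\<exists>i<n. x ! i \<noteq> 0)"
    then have "x = replicate n 0" using l by (intro nth_equalityI) auto
    then show False using x by simp
  qed
  then obtain i where "i < n" "x ! i \<noteq> 0" by blast
  then show ?thesis using cube_nth[OF x(1)] by blast
qed

lemma cube_update: "x \<in> cube n \<Longrightarrow> v \<in> {0,1} \<Longrightarrow> x[i := v] \<in> cube n"
  by (auto simp: cube_def dest: set_update_subset_insert[THEN subsetD])

lemma adjacent_iff:
  assumes "u \<in> cube m" "w \<in> cube m"
  shows "adjacent u w \<longleftrightarrow> (\<exists>i<m. w = u[i := 1 - u ! i])"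
proof
  have lu: "length u = m" "length w = m" using assms by (auto simp: cube_def)
  assume "adjacent u w"
  then have "card {i. i < length u \<and> u ! i \<noteq> w ! i} = 1" unfolding adjacent_def by blast
  then obtain i where I: "{i. i < length u \<and> u ! i \<noteq> w ! i} = {i}" by (rule card_1_singletonE)
  have "i \<in> {i. i < length u \<and> u ! i \<noteq> w ! i}" using I by simp
  then have im: "i < m" and ne: "u ! i \<noteq> w ! i" using lu by auto
  have oth: "u ! j = w ! j" if "j < m" "j \<noteq> i" for j
  proof (rule ccontr)
    assume "u ! j \<noteq> w ! j"
    then have "j \<in> {i. i < length u \<and> u ! i \<noteq> w ! i}" using that lu by simp
    then show False using I that(2) by simp
  qed
  have wi: "w ! i = 1 - u ! i"
    using cube_nth[OF assms(1) im] cube_nth[OF assms(2) im] ne by auto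
  have "w = u[i := 1 - u ! i]"
  proof (rule nth_equalityI)
    show "length w = length (u[i := 1 - u ! i])" using lu by simp
    fix j assume j: "j < length w"
    show "w ! j = u[i := 1 - u ! i] ! j"
    proof (cases "j = i")
      case True
      then show ?thesis using wi im lu by simp
    next
      case False
      then show ?thesis using oth[of j] j lu by simp
    qed
  qed
  then show "\<exists>i<m. w = u[i := 1 - u ! i]" using im by blast
next
  assume "\<exists>i<m. w = u[i := 1 - u ! i]"
  then obtain i where i: "i < m" "w = u[i := 1 - u ! i]" by blast
  have lu: "length u = m" using assms by (auto simp: cube_def)
  have ne: "u ! i \<noteq> 1 - u ! i" by arith
  have "{j. j < length u \<and> u ! j \<noteq> w ! j} = {i}"
  proof (rule set_eqI)
    fix j show "j \<in> {j. j < length u \<and> u ! j \<noteq> w ! j} \<longleftrightarrow> j \<in> {i}"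
      by (cases "j = i") (use i lu ne in simp_all)
  qed
  then show "adjacent u w" using i lu by (simp add: adjacent_def)
qed

lemma adjacent_flip: "u \<in> cube m \<Longrightarrow> i < m \<Longrightarrow> adjacent u (u[i := 1 - u ! i])"
  using adjacent_iff cube_update cube_nth by (metis insertCI diff_self diff_zero singletonI)

lemma adjacent_append:
  assumes "x \<in> cube n" "y \<in> cube n" "set t \<subseteq> {0,1}"
  shows "adjacent (x @ t) (y @ t) \<longleftrightarrow> adjacent x y"
proof -
  have lx: "length x = n" "length y = n" using assms by (auto simp: cube_def)
  have "{i. i < length (x @ t) \<and> (x @ t) ! i \<noteq> (y @ t) ! i} = {i. i < length x \<and> x ! i \<noteq> y ! i}"
    using lx by (auto simp: nth_append split: if_splits)
  then show ?thesis using lx by (simp add: adjacent_def)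
qed

lemma neighbor4:
  assumes "x \<in> cube n" "set [a,b,c,d] \<subseteq> {0,1}" "w \<in> cube (n+4)" "adjacent (x @ [a,b,c,d]) w"
  shows "(\<exists>i<n. w = x[i := 1 - x ! i] @ [a,b,c,d]) \<or> w = x @ [1-a,b,c,d] \<or> w = x @ [a,1-b,c,d]
     \<or> w = x @ [a,b,1-c,d] \<or> w = x @ [a,b,c,1-d]"
proof -
  have lx: "length x = n" using assms by (auto simp: cube_def)
  have u: "x @ [a,b,c,d] \<in> cube (n+4)" using assms(1,2) lx by (auto simp: cube_def)
  obtain i where i: "i < n + 4" "w = (x @ [a,b,c,d])[i := 1 - (x @ [a,b,c,d]) ! i]"
    using adjacent_iff[OF u assms(3)] assms(4) by blast
  have h: "\<And>i. i < n \<Longrightarrow> (x @ [a,b,c,d])[i := 1 - (x @ [a,b,c,d]) ! i] = x[i := 1 - x ! i] @ [a,b,c,d]"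
    "(x @ [a,b,c,d])[n := 1 - (x @ [a,b,c,d]) ! n] = x @ [1-a,b,c,d]"
    "(x @ [a,b,c,d])[n+1 := 1 - (x @ [a,b,c,d]) ! (n+1)] = x @ [a,1-b,c,d]"
    "(x @ [a,b,c,d])[n+2 := 1 - (x @ [a,b,c,d]) ! (n+2)] = x @ [a,b,1-c,d]"
    "(x @ [a,b,c,d])[n+3 := 1 - (x @ [a,b,c,d]) ! (n+3)] = x @ [a,b,c,1-d]"
    using lx by (simp_all add: list_update_append nth_append)
  have "i < n \<or> i = n \<or> i = n+1 \<or> i = n+2 \<or> i = n+3" using i(1) by arith
  then show ?thesis
  proof (elim disjE)
    assume "i < n" then show ?thesis using h(1)[of i] i(2) by blast
  qed (use h i(2) in simp_all)
qed

lemma ip_single: "increasing_path g m [u] \<longleftrightarrow> u \<in> cube m"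
  by (simp add: increasing_path_def)

lemma ip_Cons2: "increasing_path g m (u # v # Q) \<longleftrightarrow>
   u \<in> cube m \<and> adjacent u v \<and> g u < g v \<and> increasing_path g m (v # Q)"
proof -
  have "(\<forall>j. Suc j < length (u # v # Q) \<longrightarrow> adjacent ((u # v # Q) ! j) ((u # v # Q) ! Suc j) \<and> g ((u # v # Q) ! j) < g ((u # v # Q) ! Suc j))
    \<longleftrightarrow> (adjacent u v \<and> g u < g v) \<and> (\<forall>j. Suc j < length (v # Q) \<longrightarrow> adjacent ((v # Q) ! j) ((v # Q) ! Suc j) \<and> g ((v # Q) ! j) < g ((v # Q) ! Suc j))"
    (is "(\<forall>j. ?A j) \<longleftrightarrow> ?B \<and> (\<forall>j. ?C j)")
  proof
    assume H: "\<forall>j. ?A j"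
    show "?B \<and> (\<forall>j. ?C j)"
    proof
      show ?B using H[rule_format, of 0] by simp
      show "\<forall>j. ?C j"
      proof (intro allI impI)
        fix j assume "Suc j < length (v # Q)"
        then show "adjacent ((v # Q) ! j) ((v # Q) ! Suc j) \<and> g ((v # Q) ! j) < g ((v # Q) ! Suc j)"
          using H[rule_format, of "Suc j"] by simp
      qed
    qed
  next
    assume H: "?B \<and> (\<forall>j. ?C j)"
    show "\<forall>j. ?A j"
    proof
      fix j show "?A j" using H by (cases j) auto
    qed
  qed
  note EQ = this
  show ?thesis unfolding increasing_path_def EQ by (simp add: conj_ac)
qed

lemma ip_Cons_hd: "increasing_path g m (u # Q) \<Longrightarrow> u \<in> cube m"
  by (simp add: increasing_path_def)



lemma sum_list_upd: "k < length xs \<Longrightarrow> sum_list (xs[k := v]) = sum_list xs + v - xs ! k" for xs :: "int list"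
  by (induction xs arbitrary: k) (auto split: nat.split)

lemma FF0: "FF G S M N 0 0 0 0 = G" by (simp add: FF_def)

definition Mk :: "nat \<Rightarrow> int" where
  "Mk k = Max (fk k ` cube (4*k+2)) - Min (fk k ` cube (4*k+2)) + 1"

lemma F_eval: "x \<in> cube (4*k+2) \<Longrightarrow>
  fk (Suc k) (x @ [a,b,c,d]) = FF (fk k x) (sum_list x) (Mk k) (int (4*k+2)) a b c d"
  by (simp add: Let_def fk.simps(2) FF_def nth_append cube_def Mk_def)

lemma Mk_bound: "x \<in> cube (4*k+2) \<Longrightarrow> y \<in> cube (4*k+2) \<Longrightarrow> fk k x - fk k y < Mk k"
proof -
  assume x: "x \<in> cube (4*k+2)" and y: "y \<in> cube (4*k+2)"
  have "fk k x \<le> Max (fk k ` cube (4*k+2))" using x finite_cube by (intro Max_ge) auto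
  moreover have "Min (fk k ` cube (4*k+2)) \<le> fk k y" using y finite_cube by (intro Min_le) auto
  ultimately show ?thesis by (simp add: Mk_def)
qed

lemma Mk_ge: "Mk k \<ge> 1"
  using Mk_bound[OF rep_cube(1) rep_cube(1), of k] by simp

declare fk.simps(2)[simp del]

locale L = fixes k :: nat
begin

abbreviation "nn \<equiv> 4*k+2"
abbreviation "g \<equiv> fk k"
abbreviation "F \<equiv> fk (Suc k)"
abbreviation "M \<equiv> Mk k"
abbreviation "r0 \<equiv> replicate nn (0::int)"
abbreviation "r1 \<equiv> replicate nn (1::int)"

lemma ar: "x \<in> cube nn \<Longrightarrow> int nn \<ge> 2 \<and> M \<ge> 1 \<and> 0 \<le> sum_list x \<and> sum_list x \<le> int nn"
  using cube_sum[of x nn] Mk_ge[of k] by simp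

lemma flip_facts:
  assumes x: "x \<in> cube nn" and i: "i < nn"
  shows "x[i := 1 - x ! i] \<in> cube nn" "adjacent x (x[i := 1 - x ! i])"
    "x ! i = 0 \<Longrightarrow> sum_list (x[i := 1 - x ! i]) = sum_list x + 1"
    "x ! i = 1 \<Longrightarrow> sum_list (x[i := 1 - x ! i]) = sum_list x - 1"
    "x ! i = 0 \<or> x ! i = 1"
proof -
  have l: "length x = nn" using x by (simp add: cube_def)
  show "x ! i = 0 \<or> x ! i = 1" using cube_nth[OF x i] .
  then show "x[i := 1 - x ! i] \<in> cube nn" using cube_update[OF x] by auto
  show "adjacent x (x[i := 1 - x ! i])" by (rule adjacent_flip[OF x i])
  show "x ! i = 0 \<Longrightarrow> sum_list (x[i := 1 - x ! i]) = sum_list x + 1"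
    using sum_list_upd[of i x] l i by simp
  show "x ! i = 1 \<Longrightarrow> sum_list (x[i := 1 - x ! i]) = sum_list x - 1"
    using sum_list_upd[of i x] l i by simp
qed

lemma S0:
  assumes x: "x \<in> cube nn" and w: "w \<in> cube (nn+4)" and adj: "adjacent (x @ [0,0,0,0]) w"
    and lt: "F (x @ [0,0,0,0]) < F w"
  shows "(\<exists>y\<in>cube nn. w = y @ [0,0,0,0] \<and> adjacent x y \<and> g x < g y) \<or> (x = r1 \<and> w = r1 @ [1,0,0,0])"
proof -
  note A = A1[of "int nn" M "sum_list x", OF ar[OF x, THEN conjunct1] ar[OF x, THEN conjunct2, THEN conjunct1]
     ar[OF x, THEN conjunct2, THEN conjunct2, THEN conjunct1] ar[OF x, THEN conjunct2, THEN conjunct2, THEN conjunct2]]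
  from neighbor4[OF x _ w adj] consider (xf) i where "i < nn" "w = x[i := 1 - x ! i] @ [0,0,0,0]"
    | (a) "w = x @ [1,0,0,0]" | (b) "w = x @ [0,1,0,0]" | (c) "w = x @ [0,0,1,0]" | (d) "w = x @ [0,0,0,1]"
    by auto
  then show ?thesis
  proof cases
    case xf
    note ff = flip_facts[OF x xf(1)]
    have "g x < g (x[i := 1 - x ! i])" using lt unfolding xf(2) F_eval[OF x] F_eval[OF ff(1)]
      by (simp add: FF0)
    then show ?thesis using xf ff by blast
  next
    case a
    then have "sum_list x = int nn" using lt A(1) unfolding a F_eval[OF x] by simp
    then have "x = r1" using cube_sum_n[OF x] by simp
    then show ?thesis using a by simp
  qed (use lt A(2-4) in \<open>simp_all add: F_eval[OF x]\<close>)
qed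


lemma arx: "x \<in> cube nn \<Longrightarrow> int nn \<ge> 2" "x \<in> cube nn \<Longrightarrow> M \<ge> 1"
  "x \<in> cube nn \<Longrightarrow> 0 \<le> sum_list x" "x \<in> cube nn \<Longrightarrow> sum_list x \<le> int nn"
  using ar by auto

lemma BX: "x \<in> cube nn \<Longrightarrow> y \<in> cube nn \<Longrightarrow> g y - g x < M" "x \<in> cube nn \<Longrightarrow> y \<in> cube nn \<Longrightarrow> g x - g y < M"
  using Mk_bound by auto

lemma S1:
  assumes x: "x \<in> cube nn" and sx: "sum_list x = int nn"
    and w: "w \<in> cube (nn+4)" and adj: "adjacent (x @ [1,0,0,0]) w"
    and lt: "F (x @ [1,0,0,0]) < F w"
  shows "w = x @ [1,1,0,0]"
proof -
  note A = A1[OF arx[OF x]]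
  from neighbor4[OF x _ w adj] consider (xf) i where "i < nn" "w = x[i := 1 - x ! i] @ [1,0,0,0]"
    | (a) "w = x @ [0,0,0,0]" | (b) "w = x @ [1,1,0,0]" | (c) "w = x @ [1,0,1,0]" | (d) "w = x @ [1,0,0,1]"
    by auto
  then show ?thesis
  proof cases
    case xf
    note ff = flip_facts[OF x xf(1)]
    have "x ! i = 1"
    proof (rule ccontr)
      assume "x ! i \<noteq> 1"
      then have "x ! i = 0" using ff(5) by simp
      then have s: "sum_list (x[i := 1 - x ! i]) = sum_list x + 1" using ff by simp
      then show False using arx(4)[OF ff(1)] sx by simp
    qed
    then have s: "sum_list (x[i := 1 - x ! i]) = sum_list x - 1" using ff by simp
    note B = B1[OF arx[OF x] BX[OF x ff(1)]]
    show ?thesis using lt B(1) sx unfolding xf(2) F_eval[OF x] F_eval[OF ff(1)] s by simp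
  qed (use lt A(7-9) sx in \<open>simp_all add: F_eval[OF x]\<close>)
qed

lemma S2:
  assumes x: "x \<in> cube nn" and w: "w \<in> cube (nn+4)" and adj: "adjacent (x @ [1,1,0,0]) w"
    and lt: "F (x @ [1,1,0,0]) < F w"
  shows "(\<exists>i<nn. x ! i = 1 \<and> w = x[i := 0] @ [1,1,0,0]) \<or> (x = r0 \<and> w = r0 @ [1,1,1,0])"
proof -
  note A = A1[OF arx[OF x]]
  from neighbor4[OF x _ w adj] consider (xf) i where "i < nn" "w = x[i := 1 - x ! i] @ [1,1,0,0]"
    | (a) "w = x @ [0,1,0,0]" | (b) "w = x @ [1,0,0,0]" | (c) "w = x @ [1,1,1,0]" | (d) "w = x @ [1,1,0,1]"
    by auto
  then show ?thesis
  proof cases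
    case xf
    note ff = flip_facts[OF x xf(1)]
    note B = B1[OF arx[OF x] BX[OF x ff(1)]]
    have "x ! i = 1"
    proof (rule ccontr)
      assume "x ! i \<noteq> 1"
      then have "x ! i = 0" using ff(5) by simp
      then have s: "sum_list (x[i := 1 - x ! i]) = sum_list x + 1" using ff by simp
      have "sum_list x + 1 \<le> int nn" using arx(4)[OF ff(1)] s by simp
      then show False using lt B(2) unfolding xf(2) F_eval[OF x] F_eval[OF ff(1)] s by simp
    qed
    then show ?thesis using xf by auto
  next
    case c
    then have "sum_list x = 0" using lt A(13) unfolding c F_eval[OF x] by simp
    then have "x = r0" using cube_sum_0[OF x] by simp
    then show ?thesis using c by simp
  qed (use lt A(11,12,15) in \<open>simp_all add: F_eval[OF x]\<close>)
qed

lemma S3: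
  assumes x: "x \<in> cube nn" and sx: "sum_list x = 0"
    and w: "w \<in> cube (nn+4)" and adj: "adjacent (x @ [1,1,1,0]) w"
    and lt: "F (x @ [1,1,1,0]) < F w"
  shows "w = x @ [1,1,1,1]"
proof -
  note A = A1[OF arx[OF x]]
  from neighbor4[OF x _ w adj] consider (xf) i where "i < nn" "w = x[i := 1 - x ! i] @ [1,1,1,0]"
    | (a) "w = x @ [0,1,1,0]" | (b) "w = x @ [1,0,1,0]" | (c) "w = x @ [1,1,0,0]" | (d) "w = x @ [1,1,1,1]"
    by auto
  then show ?thesis
  proof cases
    case xf
    note ff = flip_facts[OF x xf(1)]
    have "x ! i = 0"
    proof (rule ccontr)
      assume "x ! i \<noteq> 0"
      then have "x ! i = 1" using ff(5) by simp
      then have s: "sum_list (x[i := 1 - x ! i]) = sum_list x - 1" using ff by simp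
      then show False using arx(3)[OF ff(1)] sx by simp
    qed
    then have s: "sum_list (x[i := 1 - x ! i]) = sum_list x + 1" using ff by simp
    note B = B1[OF arx[OF x] BX[OF x ff(1)]]
    show ?thesis using lt B(4) sx unfolding xf(2) F_eval[OF x] F_eval[OF ff(1)] s by simp
  qed (use lt A(16-18) sx in \<open>simp_all add: F_eval[OF x]\<close>)
qed

lemma S4:
  assumes x: "x \<in> cube nn" and w: "w \<in> cube (nn+4)" and adj: "adjacent (x @ [1,1,1,1]) w"
    and lt: "F (x @ [1,1,1,1]) < F w"
  shows "\<exists>y\<in>cube nn. w = y @ [1,1,1,1] \<and> adjacent x y \<and> g x < g y"
proof -
  note A = A1[OF arx[OF x]]
  from neighbor4[OF x _ w adj] consider (xf) i where "i < nn" "w = x[i := 1 - x ! i] @ [1,1,1,1]"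
    | (a) "w = x @ [0,1,1,1]" | (b) "w = x @ [1,0,1,1]" | (c) "w = x @ [1,1,0,1]" | (d) "w = x @ [1,1,1,0]"
    by auto
  then show ?thesis
  proof cases
    case xf
    note ff = flip_facts[OF x xf(1)]
    note B = B1[OF arx[OF x] BX[OF x ff(1)]]
    have "g x < g (x[i := 1 - x ! i])" using lt B(5) unfolding xf(2) F_eval[OF x] F_eval[OF ff(1)] by simp
    then show ?thesis using xf ff by blast
  qed (use lt A(20-23) in \<open>simp_all add: F_eval[OF x]\<close>)
qed


lemma adj_tail:
  assumes x: "x \<in> cube nn" and t: "set t \<subseteq> {0,1}" "length t = 4" and j: "j < 4"
  shows "adjacent (x @ t) (x @ t[j := 1 - t ! j])" "x @ t[j := 1 - t ! j] \<in> cube (nn+4)"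
proof -
  have l: "length x = nn" using x by (simp add: cube_def)
  have u: "x @ t \<in> cube (nn + 4)" using x t l by (auto simp: cube_def)
  have e: "(x @ t)[nn + j := 1 - (x @ t) ! (nn + j)] = x @ t[j := 1 - t ! j]"
    using l by (simp add: list_update_append nth_append)
  have "nn + j < nn + 4" using j by simp
  from adjacent_flip[OF u this] show "adjacent (x @ t) (x @ t[j := 1 - t ! j])" unfolding e .
  have "t ! j \<in> set t" using t(2) j by simp
  then have "t ! j \<in> {0,1}" using t(1) by blast
  then have "1 - t ! j \<in> {0,1}" by auto
  have e': "(x @ t)[nn + j := 1 - t ! j] = x @ t[j := 1 - t ! j]" using l by (simp add: list_update_append)
  from cube_update[OF u \<open>1 - t ! j \<in> {0,1}\<close>, of "nn+j"] show "x @ t[j := 1 - t ! j] \<in> cube (nn+4)" unfolding e' .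
qed

lemma notmax_by: "w \<in> cube m \<Longrightarrow> adjacent v w \<Longrightarrow> G v < G w \<Longrightarrow> \<not> local_max G m v"
  by (auto simp: local_max_def)

lemma notmax_tail:
  assumes x: "x \<in> cube nn" and t: "set t \<subseteq> {0,1}" "length t = 4" and j: "j < 4"
    and lt: "F (x @ t) < F (x @ t[j := 1 - t ! j])"
  shows "\<not> local_max F (nn+4) (x @ t)"
  using notmax_by[OF adj_tail(2)[OF x t j] adj_tail(1)[OF x t j], of F] lt by simp

lemma N0: assumes x: "x \<in> cube nn" and sx: "sum_list x = int nn"
  shows "\<not> local_max F (nn+4) (x @ [0,0,0,0])"
proof -
  note A = A1[OF arx[OF x]]
  have "F (x @ [0,0,0,0]) < F (x @ [1,0,0,0])" using A(5) sx by (simp add: F_eval[OF x])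
  then show ?thesis using notmax_tail[OF x, of "[0,0,0,0]" 0] by simp
qed

lemma N1: assumes x: "x \<in> cube nn" and sx: "sum_list x = int nn"
  shows "\<not> local_max F (nn+4) (x @ [1,0,0,0])"
proof -
  note A = A1[OF arx[OF x]]
  have "F (x @ [1,0,0,0]) < F (x @ [1,1,0,0])" using A(10) sx by (simp add: F_eval[OF x])
  then show ?thesis using notmax_tail[OF x, of "[1,0,0,0]" 1] by simp
qed

lemma N3: assumes x: "x \<in> cube nn" and sx: "sum_list x = 0"
  shows "\<not> local_max F (nn+4) (x @ [1,1,1,0])"
proof -
  note A = A1[OF arx[OF x]]
  have "F (x @ [1,1,1,0]) < F (x @ [1,1,1,1])" using A(19) sx by (simp add: F_eval[OF x])
  then show ?thesis using notmax_tail[OF x, of "[1,1,1,0]" 3] by simp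
qed

lemma N2: assumes x: "x \<in> cube nn" shows "\<not> local_max F (nn+4) (x @ [1,1,0,0])"
proof (cases "sum_list x = 0")
  case True
  note A = A1[OF arx[OF x]]
  have "F (x @ [1,1,0,0]) < F (x @ [1,1,1,0])" using A(14) True by (simp add: F_eval[OF x])
  then show ?thesis using notmax_tail[OF x, of "[1,1,0,0]" 2] by simp
next
  case False
  then have "x \<noteq> r0" by (auto simp: sum_rep)
  then obtain i where i: "i < nn" "x ! i = 1" using cube_nonzero[OF x] by blast
  note ff = flip_facts[OF x i(1)]
  note B = B1[OF arx[OF x] BX[OF x ff(1)]]
  have s: "sum_list (x[i := 1 - x ! i]) = sum_list x - 1" using ff i by simp
  have s1: "sum_list x \<ge> 1" using arx(3)[OF ff(1)] s by simp
  have w: "x[i := 1 - x ! i] @ [1,1,0,0] \<in> cube (nn+4)" using ff(1) by (intro cube_app4) auto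
  have adj: "adjacent (x @ [1,1,0,0]) (x[i := 1 - x ! i] @ [1,1,0,0])"
    using adjacent_append[OF x ff(1), of "[1,1,0,0]"] ff(2) by simp
  show ?thesis using notmax_by[OF w adj, of F] B(3)[OF s1]
    by (simp add: F_eval[OF x] F_eval[OF ff(1)] s)
qed

lemma LM0: assumes x: "x \<in> cube nn" and lm: "local_max F (nn+4) (x @ [0,0,0,0])"
  shows "local_max g nn x"
  unfolding local_max_def
proof (intro conjI ballI impI)
  show "x \<in> cube nn" by (rule x)
  fix y assume y: "y \<in> cube nn" and adj: "adjacent x y"
  have w: "y @ [0,0,0,0] \<in> cube (nn+4)" using y by (intro cube_app4) auto
  have "adjacent (x @ [0,0,0,0]) (y @ [0,0,0,0])" using adjacent_append[OF x y, of "[0,0,0,0]"] adj by simp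
  then have "\<not> F (x @ [0,0,0,0]) < F (y @ [0,0,0,0])" using lm w by (auto simp: local_max_def)
  then show "\<not> g x < g y" by (simp add: F_eval[OF x] F_eval[OF y] FF0)
qed

lemma LM4: assumes x: "x \<in> cube nn" and lm: "local_max F (nn+4) (x @ [1,1,1,1])"
  shows "local_max g nn x"
  unfolding local_max_def
proof (intro conjI ballI impI)
  show "x \<in> cube nn" by (rule x)
  fix y assume y: "y \<in> cube nn" and adj: "adjacent x y"
  note B = B1[OF arx[OF x] BX[OF x y]]
  have w: "y @ [1,1,1,1] \<in> cube (nn+4)" using y by (intro cube_app4) auto
  have "adjacent (x @ [1,1,1,1]) (y @ [1,1,1,1])" using adjacent_append[OF x y, of "[1,1,1,1]"] adj by simp
  then have "\<not> F (x @ [1,1,1,1]) < F (y @ [1,1,1,1])" using lm w by (auto simp: local_max_def)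
  then show "\<not> g x < g y" using B(5) by (simp add: F_eval[OF x] F_eval[OF y])
qed


lemma ipC: "increasing_path G m (u # v # Q) \<Longrightarrow> u \<in> cube m \<and> v \<in> cube m \<and> adjacent u v \<and> G u < G v \<and> increasing_path G m (v # Q)"
  using ip_Cons2[of G m u v Q] ip_Cons_hd[of G m v Q] by auto

lemma phase5:
  "x \<in> cube nn \<Longrightarrow> increasing_path F (nn+4) ((x @ [1,1,1,1]) # Q) \<Longrightarrow>
   \<exists>E. (x @ [1,1,1,1]) # Q = map (\<lambda>y. y @ [1,1,1,1]) E \<and> increasing_path g nn E \<and> hd E = x
     \<and> (local_max F (nn+4) (last ((x @ [1,1,1,1]) # Q)) \<longrightarrow> local_max g nn (last E))"
proof (induction Q arbitrary: x)
  case Nil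
  show ?case
  proof (intro exI conjI)
    show "[x @ [1,1,1,1]] = map (\<lambda>y. y @ [1,1,1,1]) [x]" by simp
    show "increasing_path g nn [x]" using Nil(1) by (simp add: ip_single)
    show "hd [x] = x" by simp
    show "local_max F (nn+4) (last [x @ [1,1,1,1]]) \<longrightarrow> local_max g nn (last [x])"
      using LM4[OF Nil(1)] by simp
  qed
next
  case (Cons w Q)
  note c = ipC[OF Cons.prems(2)]
  obtain y where y: "y \<in> cube nn" "w = y @ [1,1,1,1]" "adjacent x y" "g x < g y"
    using S4[OF Cons.prems(1)] c by blast
  have ipy: "increasing_path F (nn+4) ((y @ [1,1,1,1]) # Q)" using c y(2) by simp
  from Cons.IH[OF y(1) ipy] obtain E where E0: "(y @ [1,1,1,1]) # Q = map (\<lambda>y. y @ [1,1,1,1]) E \<and> increasing_path g nn E \<and> hd E = y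
     \<and> (local_max F (nn+4) (last ((y @ [1,1,1,1]) # Q)) \<longrightarrow> local_max g nn (last E))"
    by (rule exE)
  note E = E0[THEN conjunct1] E0[THEN conjunct2, THEN conjunct1] E0[THEN conjunct2, THEN conjunct2, THEN conjunct1]
    E0[THEN conjunct2, THEN conjunct2, THEN conjunct2]
  have En: "E \<noteq> []" using E(1) by auto
  then have Ee: "E = y # tl E" using E(3) by (cases E) auto
  have ip: "increasing_path g nn (x # E)"
    using ip_Cons2[of g nn x y "tl E"] Ee E(2) y(3,4) Cons.prems(1) by simp
  show ?case
  proof (intro exI conjI)
    show "(x @ [1,1,1,1]) # w # Q = map (\<lambda>y. y @ [1,1,1,1]) (x # E)" using E(1) y(2) by simp
    show "increasing_path g nn (x # E)" by (rule ip)
    show "hd (x # E) = x" by simp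
    show "local_max F (nn+4) (last ((x @ [1,1,1,1]) # w # Q)) \<longrightarrow> local_max g nn (last (x # E))"
      using E(4) En y(2) by simp
  qed
qed

lemma phase3:
  "x \<in> cube nn \<Longrightarrow> increasing_path F (nn+4) ((x @ [1,1,0,0]) # Q) \<Longrightarrow>
   local_max F (nn+4) (last ((x @ [1,1,0,0]) # Q)) \<Longrightarrow>
   \<exists>C R. (x @ [1,1,0,0]) # Q = map (\<lambda>y. y @ [1,1,0,0]) C @ (r0 @ [1,1,1,0]) # R
     \<and> set C \<subseteq> cube nn \<and> hd C = x \<and> last C = r0 \<and> length C = nat (sum_list x) + 1
     \<and> (\<forall>j < length C - 1. \<exists>i<nn. C ! j ! i = 1 \<and> C ! Suc j = (C ! j)[i := 0])
     \<and> increasing_path F (nn+4) ((r0 @ [1,1,1,0]) # R) \<and> local_max F (nn+4) (last ((r0 @ [1,1,1,0]) # R))"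
proof (induction Q arbitrary: x)
  case Nil
  then show ?case using N2 by simp
next
  case (Cons w Q)
  note c = ipC[OF Cons.prems(2)]
  from S2[OF Cons.prems(1)] c
  consider (dn) i where "i < nn" "x ! i = 1" "w = x[i := 0] @ [1,1,0,0]" | (up) "x = r0" "w = r0 @ [1,1,1,0]"
    by blast
  then show ?case
  proof cases
    case dn
    note ff = flip_facts[OF Cons.prems(1) dn(1)]
    have x'eq: "x[i := 1 - x ! i] = x[i := 0]" using dn by simp
    have x': "x[i := 0] \<in> cube nn" using ff(1) x'eq by simp
    have s: "sum_list (x[i := 0]) = sum_list x - 1" using ff(4) dn(2) x'eq by simp
    have s0: "sum_list (x[i := 0]) \<ge> 0" using arx(3)[OF x'] .
    have ip': "increasing_path F (nn+4) ((x[i := 0] @ [1,1,0,0]) # Q)" using c dn(3) by simp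
    have lm': "local_max F (nn+4) (last ((x[i := 0] @ [1,1,0,0]) # Q))" using Cons.prems(3) dn(3) by simp
    from Cons.IH[OF x' ip' lm'] obtain C R where CR0: "(x[i := 0] @ [1,1,0,0]) # Q = map (\<lambda>y. y @ [1,1,0,0]) C @ (r0 @ [1,1,1,0]) # R
     \<and> set C \<subseteq> cube nn \<and> hd C = x[i := 0] \<and> last C = r0 \<and> length C = nat (sum_list (x[i := 0])) + 1
     \<and> (\<forall>j < length C - 1. \<exists>i<nn. C ! j ! i = 1 \<and> C ! Suc j = (C ! j)[i := 0])
     \<and> increasing_path F (nn+4) ((r0 @ [1,1,1,0]) # R) \<and> local_max F (nn+4) (last ((r0 @ [1,1,1,0]) # R))"
      by (elim exE)
    note CR = CR0[THEN conjunct1] CR0[THEN conjunct2, THEN conjunct1]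
      CR0[THEN conjunct2, THEN conjunct2, THEN conjunct1]
      CR0[THEN conjunct2, THEN conjunct2, THEN conjunct2, THEN conjunct1]
      CR0[THEN conjunct2, THEN conjunct2, THEN conjunct2, THEN conjunct2, THEN conjunct1]
      CR0[THEN conjunct2, THEN conjunct2, THEN conjunct2, THEN conjunct2, THEN conjunct2, THEN conjunct1]
      CR0[THEN conjunct2, THEN conjunct2, THEN conjunct2, THEN conjunct2, THEN conjunct2, THEN conjunct2, THEN conjunct1]
      CR0[THEN conjunct2, THEN conjunct2, THEN conjunct2, THEN conjunct2, THEN conjunct2, THEN conjunct2, THEN conjunct2]
    have Cn: "C \<noteq> []" using CR(5) by auto
    have st: "\<forall>j < length (x # C) - 1. \<exists>i<nn. (x # C) ! j ! i = 1 \<and> (x # C) ! Suc j = ((x # C) ! j)[i := 0]"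
    proof (intro allI impI)
      fix j assume j: "j < length (x # C) - 1"
      show "\<exists>i<nn. (x # C) ! j ! i = 1 \<and> (x # C) ! Suc j = ((x # C) ! j)[i := 0]"
      proof (cases j)
        case 0
        have "(x # C) ! Suc 0 = x[i := 0]" using CR(3) Cn by (cases C) auto
        then show ?thesis using dn(1,2) 0 by auto
      next
        case (Suc j')
        then have "j' < length C - 1" using j by simp
        then show ?thesis using CR(6) Suc by simp
      qed
    qed
    show ?thesis
    proof (intro exI conjI)
      show "(x @ [1,1,0,0]) # w # Q = map (\<lambda>y. y @ [1,1,0,0]) (x # C) @ (r0 @ [1,1,1,0]) # R"
        using CR(1) dn(3) by simp
      show "set (x # C) \<subseteq> cube nn" using CR(2) Cons.prems(1) by simp
      show "hd (x # C) = x" by simp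
      show "last (x # C) = r0" using CR(4) Cn by simp
      show "length (x # C) = nat (sum_list x) + 1" using CR(5) s s0 by simp
    qed (use st CR(7,8) in simp_all)
  next
    case up
    have sr: "sum_list x = 0" using up(1) by (simp add: sum_rep)
    show ?thesis
    proof (intro exI conjI)
      show "(x @ [1,1,0,0]) # w # Q = map (\<lambda>y. y @ [1,1,0,0]) [x] @ (r0 @ [1,1,1,0]) # Q"
        using up by simp
      show "set [x] \<subseteq> cube nn" using Cons.prems(1) by simp
      show "length [x] = nat (sum_list x) + 1" using sr by simp
      show "increasing_path F (nn+4) ((r0 @ [1,1,1,0]) # Q)" using c up(2) by simp
      show "local_max F (nn+4) (last ((r0 @ [1,1,1,0]) # Q))" using Cons.prems(3) up(2) by simp
    qed (use up(1) in simp_all)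
  qed
qed

lemma phase1:
  "x \<in> cube nn \<Longrightarrow> increasing_path F (nn+4) ((x @ [0,0,0,0]) # Q) \<Longrightarrow>
   local_max F (nn+4) (last ((x @ [0,0,0,0]) # Q)) \<Longrightarrow>
   (\<exists>A R. (x @ [0,0,0,0]) # Q = map (\<lambda>y. y @ [0,0,0,0]) A @ (r1 @ [1,0,0,0]) # R
     \<and> increasing_path g nn A \<and> hd A = x \<and> last A = r1
     \<and> increasing_path F (nn+4) ((r1 @ [1,0,0,0]) # R) \<and> local_max F (nn+4) (last ((r1 @ [1,0,0,0]) # R)))
   \<or> (\<exists>A. (x @ [0,0,0,0]) # Q = map (\<lambda>y. y @ [0,0,0,0]) A \<and> maximal_increasing_path g nn A \<and> hd A = x)"
proof (induction Q arbitrary: x)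
  case Nil
  show ?case
  proof (rule disjI2, intro exI conjI)
    show "[x @ [0,0,0,0]] = map (\<lambda>y. y @ [0,0,0,0]) [x]" by simp
    show "maximal_increasing_path g nn [x]"
      using Nil LM0[OF Nil(1)] by (simp add: maximal_increasing_path_def ip_single)
    show "hd [x] = x" by simp
  qed
next
  case (Cons w Q)
  note c = ipC[OF Cons.prems(2)]
  from S0[OF Cons.prems(1)] c
  consider (mv) y where "y \<in> cube nn" "w = y @ [0,0,0,0]" "adjacent x y" "g x < g y"
    | (up) "x = r1" "w = r1 @ [1,0,0,0]"
    by blast
  then show ?case
  proof cases
    case mv
    have ip': "increasing_path F (nn+4) ((y @ [0,0,0,0]) # Q)" using c mv(2) by simp
    have lm': "local_max F (nn+4) (last ((y @ [0,0,0,0]) # Q))" using Cons.prems(3) mv(2) by simp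
    note IH = Cons.IH[OF mv(1) ip' lm']
    have ext: "increasing_path g nn (x # A)" if "increasing_path g nn A" "hd A = y" "A \<noteq> []" for A
    proof -
      have "A = y # tl A" using that by (cases A) auto
      then show ?thesis using that(1) mv(3,4) Cons.prems(1) ip_Cons2[of g nn x y "tl A"] by simp
    qed
    from IH show ?thesis
    proof (elim disjE exE)
      fix A R assume AR0: "(y @ [0,0,0,0]) # Q = map (\<lambda>y. y @ [0,0,0,0]) A @ (r1 @ [1,0,0,0]) # R
     \<and> increasing_path g nn A \<and> hd A = y \<and> last A = r1
     \<and> increasing_path F (nn+4) ((r1 @ [1,0,0,0]) # R) \<and> local_max F (nn+4) (last ((r1 @ [1,0,0,0]) # R))"
      note AR = AR0[THEN conjunct1] AR0[THEN conjunct2, THEN conjunct1]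
        AR0[THEN conjunct2, THEN conjunct2, THEN conjunct1]
        AR0[THEN conjunct2, THEN conjunct2, THEN conjunct2, THEN conjunct1]
        AR0[THEN conjunct2, THEN conjunct2, THEN conjunct2, THEN conjunct2, THEN conjunct1]
        AR0[THEN conjunct2, THEN conjunct2, THEN conjunct2, THEN conjunct2, THEN conjunct2]
      have An: "A \<noteq> []" using AR(2) by (auto simp: increasing_path_def)
      show ?thesis
      proof (rule disjI1, intro exI conjI)
        show "(x @ [0,0,0,0]) # w # Q = map (\<lambda>y. y @ [0,0,0,0]) (x # A) @ (r1 @ [1,0,0,0]) # R"
          using AR(1) mv(2) by simp
        show "increasing_path g nn (x # A)" using ext[OF AR(2,3) An] .
        show "hd (x # A) = x" by simp
        show "last (x # A) = r1" using AR(4) An by simp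
      qed (use AR(5,6) in simp_all)
    next
      fix A assume AR0: "(y @ [0,0,0,0]) # Q = map (\<lambda>y. y @ [0,0,0,0]) A \<and> maximal_increasing_path g nn A \<and> hd A = y"
      note AR = AR0[THEN conjunct1] AR0[THEN conjunct2, THEN conjunct1] AR0[THEN conjunct2, THEN conjunct2]
      have An: "A \<noteq> []" using AR(1) by auto
      have ip: "increasing_path g nn A" "local_max g nn (last A)"
        using AR(2) by (simp_all add: maximal_increasing_path_def)
      show ?thesis
      proof (rule disjI2, intro exI conjI)
        show "(x @ [0,0,0,0]) # w # Q = map (\<lambda>y. y @ [0,0,0,0]) (x # A)"
          using AR(1) mv(2) by simp
        show "maximal_increasing_path g nn (x # A)"
          using ext[OF ip(1) AR(3) An] ip(2) An by (simp add: maximal_increasing_path_def)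
        show "hd (x # A) = x" by simp
      qed
    qed
  next
    case up
    show ?thesis
    proof (rule disjI1, intro exI conjI)
      show "(x @ [0,0,0,0]) # w # Q = map (\<lambda>y. y @ [0,0,0,0]) [x] @ (r1 @ [1,0,0,0]) # Q"
        using up by simp
      show "increasing_path g nn [x]" using Cons.prems(1) by (simp add: ip_single)
      show "increasing_path F (nn+4) ((r1 @ [1,0,0,0]) # Q)" using c up(2) by simp
      show "local_max F (nn+4) (last ((r1 @ [1,0,0,0]) # Q))" using Cons.prems(3) up(2) by simp
    qed (use up(1) in simp_all)
  qed
qed

end


lemma rep4: "replicate (n + 4) a = replicate n a @ [a,a,a,a]"
proof -
  have "replicate 4 a = [a,a,a,a]" by (simp add: numeral_eq_Suc)
  then show ?thesis by (simp only: replicate_add)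
qed

context L begin

lemma core:
  assumes IH: "\<forall>Q. maximal_increasing_path g nn Q \<and> hd Q = r0 \<longrightarrow> last Q = r1"
    and P: "maximal_increasing_path F (nn+4) P" and hP: "hd P = replicate (nn+4) 0"
  shows "\<exists>A C E.
     P = map (\<lambda>x. x @ [0,0,0,0]) A
         @ [r1 @ [1,0,0,0]]
         @ map (\<lambda>x. x @ [1,1,0,0]) C
         @ [r0 @ [1,1,1,0]]
         @ map (\<lambda>x. x @ [1,1,1,1]) E
     \<and> increasing_path g nn A \<and> hd A = r0 \<and> last A = r1
     \<and> length C = nn + 1 \<and> set C \<subseteq> cube nn \<and> hd C = r1 \<and> last C = r0
     \<and> (\<forall>j < nn. \<exists>i < nn. C ! j ! i = 1 \<and> C ! Suc j = (C ! j)[i := 0])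
     \<and> maximal_increasing_path g nn E \<and> hd E = r0"
proof -
  have ipP: "increasing_path F (nn+4) P" and lmP: "local_max F (nn+4) (last P)"
    using P by (simp_all add: maximal_increasing_path_def)
  have Pn: "P \<noteq> []" using ipP by (simp add: increasing_path_def)
  have h0: "hd P = r0 @ [0,0,0,0]" using hP unfolding rep4 .
  have Peq: "P = (r0 @ [0,0,0,0]) # tl P" using Pn h0 by (cases P) auto
  have c0: "r0 \<in> cube nn" "r1 \<in> cube nn" by (rule rep_cube)+
  have s0: "sum_list r0 = 0" and s1: "sum_list r1 = int nn" by (simp_all add: sum_rep)
  have ip1: "increasing_path F (nn+4) ((r0 @ [0,0,0,0]) # tl P)" using ipP Peq by simp
  have lm1: "local_max F (nn+4) (last ((r0 @ [0,0,0,0]) # tl P))" using lmP Peq by simp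
  from phase1[OF c0(1) ip1 lm1] show ?thesis
  proof (elim disjE exE)
    fix A assume AR0: "(r0 @ [0,0,0,0]) # tl P = map (\<lambda>y. y @ [0,0,0,0]) A \<and> maximal_increasing_path g nn A \<and> hd A = r0"
    have An: "A \<noteq> []" using AR0 by auto
    have "last A = r1" using IH[rule_format] AR0 by simp
    then have "last P = r1 @ [0,0,0,0]" using AR0 Peq An by (metis last_map)
    then show ?thesis using lmP N0[OF c0(2) s1] by simp
  next
    fix A R assume AR0: "(r0 @ [0,0,0,0]) # tl P = map (\<lambda>y. y @ [0,0,0,0]) A @ (r1 @ [1,0,0,0]) # R
     \<and> increasing_path g nn A \<and> hd A = r0 \<and> last A = r1
     \<and> increasing_path F (nn+4) ((r1 @ [1,0,0,0]) # R) \<and> local_max F (nn+4) (last ((r1 @ [1,0,0,0]) # R))"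
    note AR = AR0[THEN conjunct1] AR0[THEN conjunct2, THEN conjunct1]
      AR0[THEN conjunct2, THEN conjunct2, THEN conjunct1]
      AR0[THEN conjunct2, THEN conjunct2, THEN conjunct2, THEN conjunct1]
      AR0[THEN conjunct2, THEN conjunct2, THEN conjunct2, THEN conjunct2, THEN conjunct1]
      AR0[THEN conjunct2, THEN conjunct2, THEN conjunct2, THEN conjunct2, THEN conjunct2]
    obtain w R' where R: "R = w # R'"
    proof (cases R)
      case Nil
      then show ?thesis using AR(6) N1[OF c0(2) s1] by simp
    next
      case (Cons w R')
      then show ?thesis using that by simp
    qed
    note cR = ipC[OF AR(5)[unfolded R]]
    have w: "w = r1 @ [1,1,0,0]" using S1[OF c0(2) s1] cR by simp
    have ip2: "increasing_path F (nn+4) ((r1 @ [1,1,0,0]) # R')" using cR w by simp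
    have lm2: "local_max F (nn+4) (last ((r1 @ [1,1,0,0]) # R'))" using AR(6) R w by simp
    from phase3[OF c0(2) ip2 lm2] obtain C R2 where CR0:
      "(r1 @ [1,1,0,0]) # R' = map (\<lambda>y. y @ [1,1,0,0]) C @ (r0 @ [1,1,1,0]) # R2
     \<and> set C \<subseteq> cube nn \<and> hd C = r1 \<and> last C = r0 \<and> length C = nat (sum_list r1) + 1
     \<and> (\<forall>j < length C - 1. \<exists>i<nn. C ! j ! i = 1 \<and> C ! Suc j = (C ! j)[i := 0])
     \<and> increasing_path F (nn+4) ((r0 @ [1,1,1,0]) # R2) \<and> local_max F (nn+4) (last ((r0 @ [1,1,1,0]) # R2))"
      by (elim exE)
    note CR = CR0[THEN conjunct1] CR0[THEN conjunct2, THEN conjunct1]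
      CR0[THEN conjunct2, THEN conjunct2, THEN conjunct1]
      CR0[THEN conjunct2, THEN conjunct2, THEN conjunct2, THEN conjunct1]
      CR0[THEN conjunct2, THEN conjunct2, THEN conjunct2, THEN conjunct2, THEN conjunct1]
      CR0[THEN conjunct2, THEN conjunct2, THEN conjunct2, THEN conjunct2, THEN conjunct2, THEN conjunct1]
      CR0[THEN conjunct2, THEN conjunct2, THEN conjunct2, THEN conjunct2, THEN conjunct2, THEN conjunct2, THEN conjunct1]
      CR0[THEN conjunct2, THEN conjunct2, THEN conjunct2, THEN conjunct2, THEN conjunct2, THEN conjunct2, THEN conjunct2]
    have lenC: "length C = nn + 1" using CR(5) s1 by simp
    obtain w2 R3 where R2: "R2 = w2 # R3"
    proof (cases R2)
      case Nil
      then show ?thesis using CR(8) N3[OF c0(1) s0] by simp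
    next
      case (Cons w R')
      then show ?thesis using that by simp
    qed
    note cR2 = ipC[OF CR(7)[unfolded R2]]
    have w2: "w2 = r0 @ [1,1,1,1]" using S3[OF c0(1) s0] cR2 by simp
    have ip3: "increasing_path F (nn+4) ((r0 @ [1,1,1,1]) # R3)" using cR2 w2 by simp
    have lm3: "local_max F (nn+4) (last ((r0 @ [1,1,1,1]) # R3))" using CR(8) R2 w2 by simp
    from phase5[OF c0(1) ip3] obtain E where E0:
      "(r0 @ [1,1,1,1]) # R3 = map (\<lambda>y. y @ [1,1,1,1]) E \<and> increasing_path g nn E \<and> hd E = r0
     \<and> (local_max F (nn+4) (last ((r0 @ [1,1,1,1]) # R3)) \<longrightarrow> local_max g nn (last E))"
      by (elim exE)
    note E = E0[THEN conjunct1] E0[THEN conjunct2, THEN conjunct1] E0[THEN conjunct2, THEN conjunct2, THEN conjunct1]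
      E0[THEN conjunct2, THEN conjunct2, THEN conjunct2]
    have Pfin: "P = map (\<lambda>x. x @ [0,0,0,0]) A
         @ [r1 @ [1,0,0,0]]
         @ map (\<lambda>x. x @ [1,1,0,0]) C
         @ [r0 @ [1,1,1,0]]
         @ map (\<lambda>x. x @ [1,1,1,1]) E"
    proof -
      have "P = map (\<lambda>y. y @ [0,0,0,0]) A @ (r1 @ [1,0,0,0]) # R" using Peq AR(1) by simp
      also have "R = (r1 @ [1,1,0,0]) # R'" using R w by simp
      also have "(r1 @ [1,1,0,0]) # R' = map (\<lambda>y. y @ [1,1,0,0]) C @ (r0 @ [1,1,1,0]) # R2" by (rule CR(1))
      also have "R2 = map (\<lambda>y. y @ [1,1,1,1]) E" using R2 w2 E(1) by simp
      finally show ?thesis by simp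
    qed
    have mE: "maximal_increasing_path g nn E"
      using E(2) E(4) lm3 by (simp add: maximal_increasing_path_def)
    show ?thesis
    proof (intro exI conjI)
      show "P = map (\<lambda>x. x @ [0,0,0,0]) A
         @ [r1 @ [1,0,0,0]]
         @ map (\<lambda>x. x @ [1,1,0,0]) C
         @ [r0 @ [1,1,1,0]]
         @ map (\<lambda>x. x @ [1,1,1,1]) E" by (rule Pfin)
      show "\<forall>j < nn. \<exists>i < nn. C ! j ! i = 1 \<and> C ! Suc j = (C ! j)[i := 0]"
        using CR(6) lenC by simp
    qed (use AR(2,3,4) lenC CR(2,3,4) mE E(3) in simp_all)
  qed
qed

lemma core_last:
  assumes IH: "\<forall>Q. maximal_increasing_path g nn Q \<and> hd Q = r0 \<longrightarrow> last Q = r1"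
    and P: "maximal_increasing_path F (nn+4) P" and hP: "hd P = replicate (nn+4) 0"
  shows "last P = replicate (nn+4) 1"
proof -
  from core[OF IH P hP] obtain A C E where
    PE: "P = map (\<lambda>x. x @ [0,0,0,0]) A
         @ [r1 @ [1,0,0,0]]
         @ map (\<lambda>x. x @ [1,1,0,0]) C
         @ [r0 @ [1,1,1,0]]
         @ map (\<lambda>x. x @ [1,1,1,1]) E" and mE: "maximal_increasing_path g nn E" and hE: "hd E = r0"
    by (elim exE conjE) (rule that)
  have En: "E \<noteq> []" using mE by (simp add: maximal_increasing_path_def increasing_path_def)
  have "last E = r1" using IH[rule_format] mE hE by simp
  then have "last P = r1 @ [1,1,1,1]" using PE En by (simp add: last_map)
  then show ?thesis unfolding rep4 .
qed

end

lemma ends_k: "maximal_increasing_path (fk k) (4*k+2) P \<Longrightarrow> hd P = replicate (4*k+2) 0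
   \<Longrightarrow> last P = replicate (4*k+2) 1"
proof (induction k arbitrary: P)
  case 0
  have e0: "4 * 0 + 2 = (2::nat)" by simp
  have lm: "local_max (fk 0) 2 (last P)" using 0(1) unfolding e0 maximal_increasing_path_def by blast
  define v where "v = last P"
  have v: "v \<in> cube 2" using lm by (simp add: local_max_def v_def)
  have nb: "\<not> fk 0 v < fk 0 w" if "w \<in> cube 2" "adjacent v w" for w
    using lm that by (simp add: local_max_def v_def)
  have lv: "length v = 2" using v by (simp add: cube_def)
  have one: "v ! i = 1" if i: "i < 2" for i
  proof (rule ccontr)
    assume "v ! i \<noteq> 1"
    then have vi: "v ! i = 0" using cube_nth[OF v i] by simp
    have w: "v[i := 1 - v ! i] \<in> cube 2" using cube_update[OF v] cube_nth[OF v i] by auto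
    have "fk 0 v < fk 0 (v[i := 1 - v ! i])"
    proof (cases "i = 0")
      case True then show ?thesis using vi lv by simp
    next
      case False then have "i = 1" using i by simp
      then show ?thesis using vi lv by simp
    qed
    then show False using nb[OF w adjacent_flip[OF v i]] by simp
  qed
  have "v = replicate 2 1"
    by (rule nth_equalityI) (use lv one in auto)
  then show ?case unfolding e0 by (simp add: v_def)
next
  case (Suc k)
  have e: "4 * Suc k + 2 = (4*k+2)+4" by simp
  have IH: "\<forall>Q. maximal_increasing_path (fk k) (4*k+2) Q \<and> hd Q = replicate (4*k+2) 0 \<longrightarrow> last Q = replicate (4*k+2) 1"
    using Suc.IH by blast
  show ?case unfolding e
    by (rule L.core_last[OF IH]) (use Suc.prems in \<open>simp_all only: e\<close>)
qed

lemma ends_all: "\<forall>Q. maximal_increasing_path (fk k) (4*k+2) Q \<and> hd Q = replicate (4*k+2) 0 \<longrightarrow> last Q = replicate (4*k+2) 1"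
  using ends_k by blast

lemma main_k:
  assumes "maximal_increasing_path (fk (Suc k)) (4*k+2+4) P" and "hd P = replicate (4*k+2+4) 0"
  shows "\<exists>A C E.
     P = map (\<lambda>x. x @ [0,0,0,0]) A
         @ [replicate (4*k+2) 1 @ [1,0,0,0]]
         @ map (\<lambda>x. x @ [1,1,0,0]) C
         @ [replicate (4*k+2) 0 @ [1,1,1,0]]
         @ map (\<lambda>x. x @ [1,1,1,1]) E
     \<and> increasing_path (fk k) (4*k+2) A \<and> hd A = replicate (4*k+2) 0 \<and> last A = replicate (4*k+2) 1
     \<and> length C = 4*k+2 + 1 \<and> set C \<subseteq> cube (4*k+2) \<and> hd C = replicate (4*k+2) 1 \<and> last C = replicate (4*k+2) 0
     \<and> (\<forall>j < 4*k+2. \<exists>i < 4*k+2. C ! j ! i = 1 \<and> C ! Suc j = (C ! j)[i := 0])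
     \<and> maximal_increasing_path (fk k) (4*k+2) E \<and> hd E = replicate (4*k+2) 0"
  by (rule L.core[OF ends_all assms])

theorem mainTheorem5:
  fixes n :: nat and P :: "int list list"
  assumes "n mod 4 = 2"
    and "maximal_increasing_path (f (n + 4)) (n + 4) P"
    and "hd P = replicate (n + 4) 0"
  shows "\<exists>A C E.
     P = map (\<lambda>x. x @ [0,0,0,0]) A
         @ [replicate n 1 @ [1,0,0,0]]
         @ map (\<lambda>x. x @ [1,1,0,0]) C
         @ [replicate n 0 @ [1,1,1,0]]
         @ map (\<lambda>x. x @ [1,1,1,1]) E
     \<and> increasing_path (f n) n A \<and> hd A = replicate n 0 \<and> last A = replicate n 1
     \<and> length C = n + 1 \<and> set C \<subseteq> cube n \<and> hd C = replicate n 1 \<and> last C = replicate n 0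
     \<and> (\<forall>j < n. \<exists>i < n. C ! j ! i = 1 \<and> C ! Suc j = (C ! j)[i := 0])
     \<and> maximal_increasing_path (f n) n E \<and> hd E = replicate n 0"
proof -
  define k where "k = n div 4"
  have n: "n = 4*k+2" using assms(1) unfolding k_def by presburger
  have fn: "f (4*k+2) = fk k" by (simp add: f_def)
  have fn4: "f (4*k+2+4) = fk (Suc k)" by (simp add: f_def)
  have a2: "maximal_increasing_path (fk (Suc k)) (4*k+2+4) P" using assms(2) unfolding n fn4 .
  have a3: "hd P = replicate (4*k+2+4) 0" using assms(3) unfolding n .
  show ?thesis unfolding n fn by (rule main_k[OF a2 a3])
qed

end
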